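(* For every $n\ge 4$, $\beta(P_{2\infty}\,\Box\, K_n)=n-1$, and $S=\{(0,0),(1,1),(2,2),\dots,(n-2,n-2)\}$ is a metric basis of $P_{2\infty}\,\Box\, K_n$.
   Context: $P_{2\infty}$ has vertex set $\mathbb Z$ with $i,j$ adjacent iff $|i-j|=1$. $K_n$ is the complete graph on vertex set $\{0,1,\dots,n-1\}$. The cartesian product $G\Box H$ has vertex set $V(G)\times V(H)$, where $(a,v)$ is adjacent to $(b,w)$ iff either $a=b$ and $vw\in E(H)$, or $v=w$ and $ab\in E(G)$. A vertex $x$ resolves $u,v$ if $d(u,x)\ne d(v,x)$ (shortest-path distance); a resolving set is a set of vertices resolving every pair of distinct vertices; $\beta$ is the minimum cardinality of a resolving set ($\infty$ if none is finite), and a metric basis is a resolving set of cardinality $\beta$. *)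

theory Defs
  imports Main "HOL-Library.Extended_Nat"
begin

text \<open>A (simple, possibly infinite) graph is given by a vertex set V and a symmetric
  adjacency relation E on V.\<close>

definition gdist :: "('a \<Rightarrow> 'a \<Rightarrow> bool) \<Rightarrow> 'a \<Rightarrow> 'a \<Rightarrow> nat" where
  "gdist E u v = (LEAST k. (E ^^ k) u v)"

definition resolves :: "('a \<Rightarrow> 'a \<Rightarrow> bool) \<Rightarrow> 'a \<Rightarrow> 'a \<Rightarrow> 'a \<Rightarrow> bool" where
  "resolves E x u v \<longleftrightarrow> gdist E u x \<noteq> gdist E v x"

definition resolving_set :: "'a set \<Rightarrow> ('a \<Rightarrow> 'a \<Rightarrow> bool) \<Rightarrow> 'a set \<Rightarrow> bool" where
  "resolving_set V E S \<longleftrightarrow> S \<subseteq> V \<and>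
     (\<forall>u\<in>V. \<forall>v\<in>V. u \<noteq> v \<longrightarrow> (\<exists>x\<in>S. resolves E x u v))"

text \<open>Metric dimension: minimum cardinality of a finite resolving set; \<infinity> if none exists.\<close>
definition metric_dim :: "'a set \<Rightarrow> ('a \<Rightarrow> 'a \<Rightarrow> bool) \<Rightarrow> enat" where
  "metric_dim V E = (INF S \<in> {S. resolving_set V E S \<and> finite S}. enat (card S))"

definition metric_basis :: "'a set \<Rightarrow> ('a \<Rightarrow> 'a \<Rightarrow> bool) \<Rightarrow> 'a set \<Rightarrow> bool" where
  "metric_basis V E S \<longleftrightarrow> resolving_set V E S \<and> finite S \<and> enat (card S) = metric_dim V E"

definition cprod_V :: "'a set \<Rightarrow> 'b set \<Rightarrow> ('a \<times> 'b) set" where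
  "cprod_V VG VH = VG \<times> VH"

definition cprod_E :: "'a set \<Rightarrow> ('a \<Rightarrow> 'a \<Rightarrow> bool) \<Rightarrow> 'b set \<Rightarrow> ('b \<Rightarrow> 'b \<Rightarrow> bool)
    \<Rightarrow> ('a \<times> 'b) \<Rightarrow> ('a \<times> 'b) \<Rightarrow> bool" where
  "cprod_E VG EG VH EH p q \<longleftrightarrow> p \<in> VG \<times> VH \<and> q \<in> VG \<times> VH \<and>
     ((fst p = fst q \<and> EH (snd p) (snd q)) \<or> (snd p = snd q \<and> EG (fst p) (fst q)))"

definition P2inf_V :: "int set" where "P2inf_V = UNIV"
definition P2inf_E :: "int \<Rightarrow> int \<Rightarrow> bool" where "P2inf_E i j \<longleftrightarrow> \<bar>i - j\<bar> = 1"

definition K_V :: "nat \<Rightarrow> nat set" where "K_V n = {0..<n}"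
definition K_E :: "nat \<Rightarrow> nat \<Rightarrow> nat \<Rightarrow> bool" where
  "K_E n v w \<longleftrightarrow> v < n \<and> w < n \<and> v \<noteq> w"

end

theory Submission
  imports Defs
begin

definition fd :: "int \<times> nat \<Rightarrow> int \<times> nat \<Rightarrow> nat" where
  "fd p q = nat \<bar>fst p - fst q\<bar> + (if snd p = snd q then 0 else 1)"

abbreviation "EE n \<equiv> cprod_E P2inf_V P2inf_E (K_V n) (K_E n)"
abbreviation "VV n \<equiv> cprod_V P2inf_V (K_V n)"

lemma EE_iff: "EE n p q \<longleftrightarrow> snd p < n \<and> snd q < n \<and>
   ((fst p = fst q \<and> snd p \<noteq> snd q) \<or> (snd p = snd q \<and> \<bar>fst p - fst q\<bar> = 1))"
  by (cases p; cases q) (auto simp: cprod_E_def P2inf_V_def P2inf_E_def K_V_def K_E_def)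

lemma lower: "(EE n ^^ k) p q \<Longrightarrow> fd p q \<le> k"
proof (induction k arbitrary: q)
  case 0 then show ?case by (simp add: fd_def)
next
  case (Suc k)
  then obtain r where r: "(EE n ^^ k) p r" "EE n r q" by auto
  have "fd p r \<le> k" using Suc.IH r(1) .
  moreover have "fd p q \<le> fd p r + 1" using r(2) unfolding EE_iff fd_def by auto
  ultimately show ?case by simp
qed

lemma walk_up: "v < n \<Longrightarrow> (EE n ^^ k) (a, v) (a + int k, v)"
proof (induction k)
  case 0 then show ?case by simp
next
  case (Suc k)
  have "EE n (a + int k, v) (a + int (Suc k), v)" using Suc.prems by (simp add: EE_iff)
  then show ?case using Suc by auto
qed

lemma walk_down: "v < n \<Longrightarrow> (EE n ^^ k) (a, v) (a - int k, v)"
proof (induction k)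
  case 0 then show ?case by simp
next
  case (Suc k)
  have "EE n (a - int k, v) (a - int (Suc k), v)" using Suc.prems by (simp add: EE_iff)
  then show ?case using Suc by auto
qed

lemma walk_line: "v < n \<Longrightarrow> (EE n ^^ nat \<bar>a - b\<bar>) (a, v) (b, v)"
proof (cases "a \<le> b")
  case True
  assume v: "v < n"
  have "(EE n ^^ nat (b - a)) (a, v) (a + int (nat (b - a)), v)" using walk_up[OF v] .
  then show ?thesis using True by simp
next
  case False
  assume v: "v < n"
  have "(EE n ^^ nat (a - b)) (a, v) (a - int (nat (a - b)), v)" using walk_down[OF v] .
  then show ?thesis using False by simp
qed

lemma walk: "v < n \<Longrightarrow> w < n \<Longrightarrow> (EE n ^^ fd (a, v) (b, w)) (a, v) (b, w)"
proof (cases "v = w")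
  case True
  assume "v < n" "w < n"
  then show ?thesis using walk_line[of v n a b] True by (simp add: fd_def)
next
  case False
  assume v: "v < n" and w: "w < n"
  have "EE n (b, v) (b, w)" using v w False by (simp add: EE_iff)
  moreover have "(EE n ^^ nat \<bar>a - b\<bar>) (a, v) (b, v)" using walk_line[OF v] .
  ultimately have "(EE n ^^ Suc (nat \<bar>a - b\<bar>)) (a, v) (b, w)" by auto
  then show ?thesis using False by (simp add: fd_def)
qed

lemma gdist_eq: "p \<in> VV n \<Longrightarrow> q \<in> VV n \<Longrightarrow> gdist (EE n) p q = fd p q"
  unfolding gdist_def
proof (rule Least_equality)
  assume "p \<in> VV n" "q \<in> VV n"
  then show "(EE n ^^ fd p q) p q" using walk[of "snd p" n "snd q" "fst p" "fst q"]
    by (cases p; cases q; auto simp: cprod_V_def K_V_def)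
next
  fix y assume "(EE n ^^ y) p q" then show "fd p q \<le> y" by (rule lower)
qed

definition S0 :: "nat \<Rightarrow> (int \<times> nat) set" where
  "S0 n = {(int i, i) | i. i \<le> n - 2}"

lemma S0_img: "S0 n = (\<lambda>i. (int i, i)) ` {..n-2}"
  by (auto simp: S0_def)

lemma card_S0: "n \<ge> 2 \<Longrightarrow> card (S0 n) = n - 1"
proof -
  assume "n \<ge> 2"
  have "inj_on (\<lambda>i. (int i, i)) {..n-2}" by (auto simp: inj_on_def)
  then have "card (S0 n) = card {..n-2}" unfolding S0_img by (rule card_image)
  then show ?thesis using \<open>n \<ge> 2\<close> by simp
qed

lemma key_int: "(a::int) \<noteq> b \<Longrightarrow> c0 \<in> {0,1} \<Longrightarrow> c1 \<in> {0,1} \<Longrightarrow> c2 \<in> {0,1::int} \<Longrightarrow>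
  d0 \<in> {0,1} \<Longrightarrow> d1 \<in> {0,1} \<Longrightarrow> d2 \<in> {0,1::int} \<Longrightarrow> c0+c1+c2 \<ge> 2 \<Longrightarrow> d0+d1+d2\<ge>2 \<Longrightarrow>
  \<bar>a\<bar> + c0 = \<bar>b\<bar> + d0 \<Longrightarrow> \<bar>a-1\<bar> + c1 = \<bar>b-1\<bar> + d1 \<Longrightarrow> \<bar>a-2\<bar> + c2 = \<bar>b-2\<bar> + d2 \<Longrightarrow> False"
  by (simp add: abs_if split: if_splits; elim disjE; linarith)

lemma key_diff:
  fixes a b :: int and v w :: nat
  assumes "a \<noteq> b"
    and "\<And>i::nat. i \<le> 2 \<Longrightarrow> fd (a, v) (int i, i) = fd (b, w) (int i, i)"
  shows False
proof -
  define c :: "nat \<Rightarrow> nat \<Rightarrow> int" where "c x i = (if x = i then 0 else 1)" for x i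
  have E: "\<bar>a - int i\<bar> + c v i = \<bar>b - int i\<bar> + c w i" if "i \<le> 2" for i
  proof -
    have "int (fd (a, v) (int i, i)) = int (fd (b, w) (int i, i))" using assms(2)[OF that] by simp
    then show ?thesis by (simp add: fd_def c_def split: if_splits)
  qed
  have cb: "c x i \<in> {0,1}" for x i by (simp add: c_def)
  have cs: "c x 0 + c x 1 + c x 2 \<ge> 2" for x by (simp add: c_def)
  show False using key_int[OF assms(1) cb[of v 0] cb[of v 1] cb[of v 2] cb[of w 0] cb[of w 1] cb[of w 2] cs[of v] cs[of w]] E[of 0] E[of 1] E[of 2]
    by simp
qed

lemma S0_resolving: "n \<ge> 4 \<Longrightarrow> resolving_set (VV n) (EE n) (S0 n)"
  unfolding resolving_set_def
proof (intro conjI ballI impI)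
  assume n: "n \<ge> 4"
  show "S0 n \<subseteq> VV n" using n by (auto simp: S0_def cprod_V_def P2inf_V_def K_V_def)
  fix p q assume p: "p \<in> VV n" and q: "q \<in> VV n" and pq: "p \<noteq> q"
  obtain a v where pa: "p = (a, v)" by (cases p)
  obtain b w where qb: "q = (b, w)" by (cases q)
  have vn: "v < n" and wn: "w < n" using p q pa qb by (auto simp: cprod_V_def K_V_def)
  have inS: "\<And>i. i \<le> n - 2 \<Longrightarrow> (int i, i) \<in> S0 n" by (auto simp: S0_def)
  have inV: "\<And>i. i \<le> n - 2 \<Longrightarrow> (int i, i) \<in> VV n" using n
    by (auto simp: cprod_V_def P2inf_V_def K_V_def)
  show "\<exists>x\<in>S0 n. resolves (EE n) x p q"
  proof (rule ccontr)
    assume "\<not> ?thesis"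
    then have eq: "\<And>i. i \<le> n - 2 \<Longrightarrow> fd (a, v) (int i, i) = fd (b, w) (int i, i)"
      using inS inV p q pa qb gdist_eq by (fastforce simp: resolves_def)
    show False
    proof (cases "a = b")
      case False
      then show False using key_diff[of a b v w] eq n by auto
    next
      case True
      then have "v \<noteq> w" using pq pa qb by auto
      show False
      proof (cases "v \<le> n - 2")
        case True
        then show False using eq[of v] \<open>v \<noteq> w\<close> \<open>a = b\<close> by (simp add: fd_def)
      next
        case False
        then have "w \<le> n - 2" using vn wn \<open>v \<noteq> w\<close> by auto
        then show False using eq[of w] \<open>v \<noteq> w\<close> \<open>a = b\<close> by (simp add: fd_def)
      qed
    qed
  qed
qed

lemma lower_card:
  assumes S: "resolving_set (VV n) (EE n) S" and fin: "finite S"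
  shows "n - 1 \<le> card S"
proof (rule ccontr)
  assume "\<not> ?thesis"
  then have c: "card S < n - 1" by simp
  have sub: "snd ` S \<subseteq> {0..<n}" using S by (auto simp: resolving_set_def cprod_V_def K_V_def)
  have "card (snd ` S) \<le> card S" using fin by (rule card_image_le)
  then have "card (snd ` S) + 2 \<le> n" using c by linarith
  then have "card ({0..<n} - snd ` S) \<ge> 2" using sub by (simp add: card_Diff_subset finite_subset)
  then have "\<not> card ({0..<n} - snd ` S) \<le> Suc 0" by simp
  then obtain v w where vw: "v \<in> {0..<n} - snd ` S" "w \<in> {0..<n} - snd ` S" "v \<noteq> w"
    by (metis card_le_Suc0_iff_eq finite_Diff finite_atLeastLessThan)
  have pV: "(0::int, v) \<in> VV n" and qV: "(0::int, w) \<in> VV n" using vw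
    by (auto simp: cprod_V_def P2inf_V_def K_V_def)
  obtain x where x: "x \<in> S" "resolves (EE n) x (0, v) (0, w)"
    using S pV qV vw(3) unfolding resolving_set_def by blast
  have xV: "x \<in> VV n" using S x(1) by (auto simp: resolving_set_def)
  have "snd x \<noteq> v" "snd x \<noteq> w" using x(1) vw by force+
  then show False using x(2) gdist_eq[OF pV xV] gdist_eq[OF qV xV]
    by (simp add: resolves_def fd_def)
qed

theorem proposition9:
  fixes n :: nat
  assumes "n \<ge> 4"
  shows "metric_dim (cprod_V P2inf_V (K_V n)) (cprod_E P2inf_V P2inf_E (K_V n) (K_E n))
           = enat (n - 1)
       \<and> metric_basis (cprod_V P2inf_V (K_V n)) (cprod_E P2inf_V P2inf_E (K_V n) (K_E n))
           {(int i, i) | i. i \<le> n - 2}"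
proof -
  have R: "resolving_set (VV n) (EE n) (S0 n)" using S0_resolving assms .
  have F: "finite (S0 n)" by (simp add: S0_img)
  have C: "card (S0 n) = n - 1" using card_S0 assms by simp
  have md: "metric_dim (VV n) (EE n) = enat (n - 1)"
    unfolding metric_dim_def
  proof (rule antisym)
    show "(INF S\<in>{S. resolving_set (VV n) (EE n) S \<and> finite S}. enat (card S)) \<le> enat (n - 1)"
      using R F C by (metis (mono_tags, lifting) INF_lower mem_Collect_eq)
  next
    show "enat (n - 1) \<le> (INF S\<in>{S. resolving_set (VV n) (EE n) S \<and> finite S}. enat (card S))"
    proof (rule INF_greatest)
      fix S assume "S \<in> {S. resolving_set (VV n) (EE n) S \<and> finite S}"
      then have "n - 1 \<le> card S" using lower_card[of n S] by blast
      then show "enat (n - 1) \<le> enat (card S)" by simp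
    qed
  qed
  show ?thesis using md R F C unfolding metric_basis_def S0_def by simp
qed

end
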